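(* Let $\mathbb P$ be a forcing by Silver trees and $n<\omega$. Then: (i) if $T\in\mathbb P$ and $s\in 2^{<\omega}$ then $T\to s\in\mathbb P$; (ii) if $T$ is a Silver tree and $s_0\in 2^n$, then $T\to s_0\in\mathbb P$ if and only if $T\in\mathrm{Col}_n(\mathbb P)$; (iii) if $U\in\mathrm{Col}_n(\mathbb P)$, $s_0\in 2^n$, $S\in\mathbb P$ and $S\subseteq U\to s_0$, then there is $V\in\mathrm{Col}_n(\mathbb P)$ such that $V\sqsubseteq_n U$ and $V\to s_0=S$; (iv) if $U\in\mathrm{Col}_n(\mathbb P)$ and $D\subseteq\mathbb P$ is open dense in $\mathbb P$, then there is $V\in\mathrm{Col}_n(\mathbb P)$ such that $V\sqsubseteq_n U$ and $V\to s\in D$ for all $s\in 2^n$.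
   Context: $2^{<\omega}$ is the set of finite binary strings, $2^n$ those of length $n$, $s^\frown i$ the extension by digit $i$. A set $T\subseteq 2^{<\omega}$ is a Silver tree if there are strings $u_0,u_1,\dots$ such that $T$ consists exactly of all strings $u_0{}^\frown i_0{}^\frown u_1{}^\frown i_1{}^\frown\cdots{}^\frown u_m{}^\frown i_m$ ($m<\omega$, $i_k\in\{0,1\}$) and all their initial segments; $\mathrm{stem}(T)=u_0$; $\mathrm{spl}_m(T)=|u_0|+1+\dots+|u_{m-1}|+1+|u_m|$. For $u\in T$, $T\restriction u=\{t\in T: u\subseteq t\text{ or }t\subseteq u\}$; $T\to i=T\restriction(\mathrm{stem}(T)^\frown i)$, $T\to s=(\cdots(T\to s(0))\cdots)\to s(|s|-1)$, $T\to\Lambda=T$. String action: for $s\in 2^m$, $t\in 2^k$, $m\le k$: $(s\cdot t)(j)=t(j)+s(j)\bmod 2$ for $j<m$, $=t(j)$ otherwise; if $m>k$, $s\cdot t=(s\restriction k)\cdot t$; $s\cdot T=\{s\cdot t:t\in T\}$. A forcing by Silver trees is a set $\mathbb P$ of Silver trees closed under $T\mapsto T\restriction u$ ($u\in T$) and $T\mapsto\sigma\cdot T$ ($\sigma\in 2^{<\omega}$), ordered by inclusion (smaller is stronger); $D\subseteq\mathbb P$ is open dense if every element of $\mathbb P$ has a subset in $D$ and $D$ is closed under subsets within $\mathbb P$. $S\sqsubseteq_n T$ means $S\subseteq T$ and $\mathrm{spl}_k(S)=\mathrm{spl}_k(T)$ for all $k<n$. $\mathrm{Col}_n(\mathbb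 P)$ is the set of all Silver trees $T$ such that $T\to s\in\mathbb P$ for all $s\in 2^n$. *)

theory Defs
  imports "HOL-Library.Sublist"
begin

text \<open>Binary strings are lists of booleans (False = digit 0, True = digit 1).\<close>

definition sil_word :: "(nat \<Rightarrow> bool list) \<Rightarrow> (nat \<Rightarrow> bool) \<Rightarrow> nat \<Rightarrow> bool list" where
  "sil_word u ds m = concat (map (\<lambda>k. u k @ [ds k]) [0..<Suc m])"

definition silver_tree_of :: "(nat \<Rightarrow> bool list) \<Rightarrow> bool list set" where
  "silver_tree_of u = {t. \<exists>m ds. prefix t (sil_word u ds m)}"

definition silver_tree :: "bool list set \<Rightarrow> bool" where
  "silver_tree T \<longleftrightarrow> (\<exists>u. T = silver_tree_of u)"

definition sil_seq :: "bool list set \<Rightarrow> nat \<Rightarrow> bool list" where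
  "sil_seq T = (SOME u. T = silver_tree_of u)"

definition stem :: "bool list set \<Rightarrow> bool list" where
  "stem T = sil_seq T 0"

definition spl :: "nat \<Rightarrow> bool list set \<Rightarrow> nat" where
  "spl m T = (\<Sum>k<m. length (sil_seq T k) + 1) + length (sil_seq T m)"

definition restr :: "bool list set \<Rightarrow> bool list \<Rightarrow> bool list set" where
  "restr T u = {t \<in> T. prefix u t \<or> prefix t u}"

definition to1 :: "bool list set \<Rightarrow> bool \<Rightarrow> bool list set" where
  "to1 T i = restr T (stem T @ [i])"

definition to :: "bool list set \<Rightarrow> bool list \<Rightarrow> bool list set" where
  "to T s = fold (\<lambda>i S. to1 S i) s T"

definition act :: "bool list \<Rightarrow> bool list \<Rightarrow> bool list" where
  "act s t = map (\<lambda>j. if j < length s then (t ! j \<noteq> s ! j) else t ! j) [0..<length t]"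

definition act_tree :: "bool list \<Rightarrow> bool list set \<Rightarrow> bool list set" where
  "act_tree s T = act s ` T"

definition silver_forcing :: "bool list set set \<Rightarrow> bool" where
  "silver_forcing P \<longleftrightarrow>
     (\<forall>T\<in>P. silver_tree T) \<and>
     (\<forall>T\<in>P. \<forall>u\<in>T. restr T u \<in> P) \<and>
     (\<forall>T\<in>P. \<forall>\<sigma>. act_tree \<sigma> T \<in> P)"

definition open_dense :: "bool list set set \<Rightarrow> bool list set set \<Rightarrow> bool" where
  "open_dense P D \<longleftrightarrow> D \<subseteq> P \<and> (\<forall>T\<in>P. \<exists>S\<in>D. S \<subseteq> T) \<and>
     (\<forall>S\<in>D. \<forall>S'\<in>P. S' \<subseteq> S \<longrightarrow> S' \<in> D)"

definition sqsub :: "nat \<Rightarrow> bool list set \<Rightarrow> bool list set \<Rightarrow> bool" where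
  "sqsub n S T \<longleftrightarrow> S \<subseteq> T \<and> (\<forall>k<n. spl k S = spl k T)"

definition Col :: "nat \<Rightarrow> bool list set set \<Rightarrow> bool list set set" where
  "Col n P = {T. silver_tree T \<and> (\<forall>s. length s = n \<longrightarrow> to T s \<in> P)}"

end

theory Submission
  imports Defs
begin

abbreviation sto where "sto \<equiv> silver_tree_of"

definition shift :: "(nat \<Rightarrow> bool list) \<Rightarrow> nat \<Rightarrow> bool list" where
  "shift u = (\<lambda>k. u (Suc k))"

lemma sil_word_0: "sil_word u ds 0 = u 0 @ [ds 0]"
  by (simp add: sil_word_def)

lemma sil_word_Suc: "sil_word u ds (Suc m) = u 0 @ [ds 0] @ sil_word (\<lambda>k. u (Suc k)) (\<lambda>k. ds (Suc k)) m"
proof -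
  have "[0..<Suc (Suc m)] = 0 # map Suc [0..<Suc m]"
    by (simp add: map_Suc_upt upt_conv_Cons del: upt_Suc)
  then show ?thesis by (simp add: sil_word_def comp_def del: upt_Suc)
qed

lemma sto_rec: "sto u = {t. prefix t (u 0)} \<union> {u 0 @ [i] @ t | i t. t \<in> sto (shift u)}"
proof (intro set_eqI iffI)
  fix t assume "t \<in> sto u"
  then obtain m ds where p: "prefix t (sil_word u ds m)" by (auto simp: silver_tree_of_def)
  show "t \<in> {t. prefix t (u 0)} \<union> {u 0 @ [i] @ t | i t. t \<in> sto (shift u)}"
  proof (cases m)
    case 0
    then have "prefix t (u 0 @ [ds 0])" using p by (simp add: sil_word_0)
    then have "prefix t (u 0) \<or> t = u 0 @ [ds 0] @ []"
      by (auto simp: prefix_append prefix_Cons)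
    moreover have "[] \<in> sto (shift u)" by (auto simp: silver_tree_of_def)
    ultimately show ?thesis by blast
  next
    case (Suc m')
    then have "prefix t (u 0 @ [ds 0] @ sil_word (shift u) (\<lambda>k. ds (Suc k)) m')"
      using p by (simp add: sil_word_Suc shift_def)
    then have "prefix t (u 0) \<or> (\<exists>t'. t = u 0 @ [ds 0] @ t' \<and> prefix t' (sil_word (shift u) (\<lambda>k. ds (Suc k)) m'))"
      by (auto simp: prefix_append prefix_Cons)
    then show ?thesis by (auto simp: silver_tree_of_def)
  qed
next
  fix t assume "t \<in> {t. prefix t (u 0)} \<union> {u 0 @ [i] @ t | i t. t \<in> sto (shift u)}"
  then show "t \<in> sto u"
  proof
    assume "t \<in> {t. prefix t (u 0)}"
    then have "prefix t (sil_word u ds 0)" for ds by (simp add: sil_word_0)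
    then show ?thesis by (auto simp: silver_tree_of_def)
  next
    assume "t \<in> {u 0 @ [i] @ t | i t. t \<in> sto (shift u)}"
    then obtain i t' m ds where t: "t = u 0 @ [i] @ t'" and p: "prefix t' (sil_word (shift u) ds m)"
      by (auto simp: silver_tree_of_def)
    define ds' where "ds' = (\<lambda>k. case k of 0 \<Rightarrow> i | Suc k \<Rightarrow> ds k)"
    have "sil_word u ds' (Suc m) = u 0 @ [i] @ sil_word (shift u) ds m"
      by (simp add: sil_word_Suc ds'_def shift_def)
    then have "prefix t (sil_word u ds' (Suc m))" using p t by simp
    then show ?thesis by (auto simp: silver_tree_of_def)
  qed
qed

lemma sto_mem_iff: "t \<in> sto u \<longleftrightarrow> prefix t (u 0) \<or> (\<exists>i t'. t = u 0 @ [i] @ t' \<and> t' \<in> sto (shift u))"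
proof -
  have "t \<in> sto u \<longleftrightarrow> t \<in> {t. prefix t (u 0)} \<union> {u 0 @ [i] @ t | i t. t \<in> sto (shift u)}"
    by (rule arg_cong[where f="\<lambda>A. t \<in> A"], rule sto_rec)
  also have "\<dots> \<longleftrightarrow> prefix t (u 0) \<or> (\<exists>i t'. t = u 0 @ [i] @ t' \<and> t' \<in> sto (shift u))" by blast
  finally show ?thesis .
qed

lemma Nil_sto: "[] \<in> sto u" by (auto simp: silver_tree_of_def)

lemma branch_mem: "u 0 @ [b] \<in> sto u"
  using Nil_sto sto_mem_iff by blast

lemma branching: assumes "w @ [False] \<in> sto u" "w @ [True] \<in> sto u" shows "prefix (u 0) w"
proof (cases "length w < length (u 0)")
  case True
  have "prefix (w @ [b]) (u 0)" if "w @ [b] \<in> sto u" for b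
  proof -
    from sto_mem_iff[THEN iffD1, OF that] show ?thesis
    proof
      assume "\<exists>i t'. w @ [b] = u 0 @ [i] @ t' \<and> t' \<in> sto (shift u)"
      then obtain i t' where "w @ [b] = u 0 @ [i] @ t'" by blast
      then have "length (w @ [b]) = length (u 0 @ [i] @ t')" by simp
      then show ?thesis using True by simp
    qed
  qed
  then have "prefix (w @ [False]) (u 0)" "prefix (w @ [True]) (u 0)" using assms by auto
  then obtain z z' where "u 0 = w @ [False] @ z" "u 0 = w @ [True] @ z'"
    by (auto simp: prefix_def)
  then have "w @ [False] @ z = w @ [True] @ z'" by simp
  then show ?thesis by simp
next
  case False
  then have "\<not> prefix (w @ [False]) (u 0)" by (auto dest: prefix_length_le)
  then obtain i t' where "w @ [False] = u 0 @ [i] @ t'" using sto_mem_iff[THEN iffD1, OF assms(1)] by blast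
  then have "prefix (u 0) (w @ [False])" by (simp add: prefix_def)
  moreover have "u 0 \<noteq> w @ [False]" using False by auto
  ultimately show ?thesis by (simp add: prefix_snoc)
qed


lemma sto_I1: "prefix t (u 0) \<Longrightarrow> t \<in> sto u"
  using sto_mem_iff by blast
lemma sto_I2: "t' \<in> sto (shift u) \<Longrightarrow> u 0 @ [i] @ t' \<in> sto u"
  using sto_mem_iff by blast
lemma sto_E: assumes "t \<in> sto u"
  obtains "prefix t (u 0)" | i t' where "t = u 0 @ [i] @ t'" "t' \<in> sto (shift u)"
  using sto_mem_iff[THEN iffD1, OF assms] by blast

lemma sto_shift_eq: "sto (shift u) = {t. u 0 @ [i] @ t \<in> sto u}"
proof (intro set_eqI iffI)
  fix t assume "t \<in> sto (shift u)" then show "t \<in> {t. u 0 @ [i] @ t \<in> sto u}"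
    using sto_I2 by blast
next
  fix t assume "t \<in> {t. u 0 @ [i] @ t \<in> sto u}"
  then have m: "u 0 @ [i] @ t \<in> sto u" by simp
  show "t \<in> sto (shift u)"
  proof (rule sto_E[OF m])
    assume "prefix (u 0 @ [i] @ t) (u 0)"
    then show ?thesis by (auto dest: prefix_length_le)
  next
    fix j t' assume "u 0 @ [i] @ t = u 0 @ [j] @ t'" "t' \<in> sto (shift u)"
    then show ?thesis by simp
  qed
qed

lemma stem_eq: assumes "sto u = sto v" shows "u 0 = v 0"
proof -
  have "prefix (v 0) (u 0)" using branching[of "u 0" v] branch_mem[of u] assms by auto
  moreover have "prefix (u 0) (v 0)" using branching[of "v 0" u] branch_mem[of v] assms by auto
  ultimately show ?thesis using prefix_order.antisym by blast
qed

lemma sto_inj: "sto u = sto v \<Longrightarrow> u k = v k"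
proof (induction k arbitrary: u v)
  case 0 then show ?case by (rule stem_eq)
next
  case (Suc k)
  have "u 0 = v 0" using Suc.prems by (rule stem_eq)
  then have "sto (shift u) = sto (shift v)"
    using sto_shift_eq[of u True] sto_shift_eq[of v True] Suc.prems by simp
  then have "shift u k = shift v k" by (rule Suc.IH)
  then show ?case by (simp add: shift_def)
qed

lemma sil_seq_sto: "sil_seq (sto u) = u"
proof -
  have "sto u = sto (sil_seq (sto u))" unfolding sil_seq_def by (rule someI[of _ u]) simp
  then show ?thesis by (intro ext sto_inj) simp
qed

lemma stem_sto: "stem (sto u) = u 0" by (simp add: stem_def sil_seq_sto)
lemma spl_sto: "spl m (sto u) = (\<Sum>k<m. length (u k) + 1) + length (u m)"
  by (simp add: spl_def sil_seq_sto)

definition merge :: "(nat \<Rightarrow> bool list) \<Rightarrow> bool \<Rightarrow> nat \<Rightarrow> bool list" where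
  "merge u i = (\<lambda>k. case k of 0 \<Rightarrow> u 0 @ [i] @ u 1 | Suc k \<Rightarrow> u (Suc (Suc k)))"

fun mergeS :: "(nat \<Rightarrow> bool list) \<Rightarrow> bool list \<Rightarrow> nat \<Rightarrow> bool list" where
  "mergeS u [] = u"
| "mergeS u (i # s) = mergeS (merge u i) s"

lemma merge_0: "merge u i 0 = u 0 @ [i] @ u 1" by (simp add: merge_def)
lemma shift_merge: "shift (merge u i) = shift (shift u)" by (simp add: merge_def shift_def)
lemma shift_0: "shift u 0 = u 1" by (simp add: shift_def)

lemma to1_sto: "to1 (sto u) i = sto (merge u i)"
proof (intro set_eqI iffI)
  fix t assume "t \<in> to1 (sto u) i"
  then have t: "t \<in> sto u" and c: "prefix (u 0 @ [i]) t \<or> prefix t (u 0 @ [i])"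
    by (auto simp: to1_def restr_def stem_sto)
  show "t \<in> sto (merge u i)"
  proof (rule sto_E[OF t])
    assume "prefix t (u 0)"
    then have "prefix t (merge u i 0)" by (auto simp: merge_0 intro: prefix_prefix)
    then show ?thesis by (rule sto_I1)
  next
    fix i' t'' assume e: "t = u 0 @ [i'] @ t''" and t'': "t'' \<in> sto (shift u)"
    have ii: "i' = i" using c e by (auto simp: prefix_def)
    show ?thesis
    proof (rule sto_E[OF t''])
      assume "prefix t'' (shift u 0)"
      then have "prefix t (merge u i 0)" using e ii by (simp add: merge_0 shift_0)
      then show ?thesis by (rule sto_I1)
    next
      fix j t' assume "t'' = shift u 0 @ [j] @ t'" "t' \<in> sto (shift (shift u))"
      then show ?thesis using e ii sto_I2[of t' "merge u i" j]
        by (simp add: merge_0 shift_0 shift_merge)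
    qed
  qed
next
  fix t assume t: "t \<in> sto (merge u i)"
  show "t \<in> to1 (sto u) i"
  proof (rule sto_E[OF t])
    assume p: "prefix t (merge u i 0)"
    then have p': "prefix t (u 0 @ [i] @ u 1)" by (simp add: merge_0)
    have "prefix (u 0 @ [i]) (u 0 @ [i] @ u 1)" by simp
    then have c: "prefix (u 0 @ [i]) t \<or> prefix t (u 0 @ [i])"
      using p' prefix_same_cases by blast
    have "t \<in> sto u"
    proof -
      from p' have "prefix t (u 0) \<or> (\<exists>z. t = u 0 @ z \<and> prefix z ([i] @ u 1))"
        by (simp only: prefix_append)
      then show ?thesis
      proof
        assume "prefix t (u 0)" then show ?thesis by (rule sto_I1)
      next
        assume "\<exists>z. t = u 0 @ z \<and> prefix z ([i] @ u 1)"
        then obtain z where z: "t = u 0 @ z" "prefix z (i # u 1)" by auto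
        then have "z = [] \<or> (\<exists>z'. z = i # z' \<and> prefix z' (u 1))" by (simp add: prefix_Cons)
        then show ?thesis
        proof
          assume "z = []" then show ?thesis using z sto_I1[of "u 0" u] by simp
        next
          assume "\<exists>z'. z = i # z' \<and> prefix z' (u 1)"
          then obtain z' where "z = i # z'" "prefix z' (shift u 0)" by (auto simp: shift_0)
          then show ?thesis using z sto_I2[of z' u i] sto_I1[of z' "shift u"] by simp
        qed
      qed
    qed
    then show ?thesis using c by (simp add: to1_def restr_def stem_sto)
  next
    fix j t' assume e: "t = merge u i 0 @ [j] @ t'" and t': "t' \<in> sto (shift (merge u i))"
    have "u 1 @ [j] @ t' \<in> sto (shift u)"
      using sto_I2[of t' "shift u" j] t' by (simp add: shift_merge shift_0)
    then have "t \<in> sto u" using e sto_I2[of "u 1 @ [j] @ t'" u i] by (simp add: merge_0)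
    moreover have "prefix (u 0 @ [i]) t" using e by (simp add: merge_0)
    ultimately show ?thesis by (simp add: to1_def restr_def stem_sto)
  qed
qed

lemma to_Cons: "to T (i # s) = to (to1 T i) s" by (simp add: to_def)
lemma to_Nil: "to T [] = T" by (simp add: to_def)

lemma to_sto: "to (sto u) s = sto (mergeS u s)"
  by (induction s arbitrary: u) (simp_all add: to_Nil to_Cons to1_sto)


lemma restr_restr: "prefix a b \<Longrightarrow> restr (restr T a) b = restr T b"
  unfolding restr_def using prefix_same_cases prefix_order.trans by blast

lemma restr_sub: "restr T a \<subseteq> T" by (auto simp: restr_def)

lemma to1_restr: "to1 (sto u) i = restr (sto u) (u 0 @ [i])"
  by (simp add: to1_def stem_sto)

lemma prefix_mergeS: "prefix (u 0) (mergeS u s 0)"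
proof (induction s arbitrary: u)
  case Nil then show ?case by simp
next
  case (Cons i s)
  have "prefix (merge u i 0) (mergeS (merge u i) s 0)" by (rule Cons.IH)
  moreover have "prefix (u 0) (merge u i 0)" by (simp add: merge_0)
  ultimately show ?case using prefix_order.trans by auto
qed

lemma restr_stem: "restr (sto u) (u 0) = sto u"
proof -
  have "prefix (u 0) t \<or> prefix t (u 0)" if "t \<in> sto u" for t
    by (rule sto_E[OF that]) auto
  then show ?thesis by (auto simp: restr_def)
qed

lemma to_restr: "to (sto u) s = restr (sto u) (mergeS u s 0)"
proof (induction s arbitrary: u)
  case Nil then show ?case by (simp add: to_Nil restr_stem)
next
  case (Cons i s)
  have p: "prefix (u 0 @ [i]) (mergeS (merge u i) s 0)"
  proof -
    have "prefix (u 0 @ [i]) (merge u i 0)" by (simp add: merge_0)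
    then show ?thesis using prefix_mergeS[of "merge u i" s] prefix_order.trans by blast
  qed
  have "to (sto u) (i # s) = to (sto (merge u i)) s" by (simp add: to_Cons to1_sto)
  also have "\<dots> = restr (sto (merge u i)) (mergeS (merge u i) s 0)" by (rule Cons.IH)
  also have "\<dots> = restr (restr (sto u) (u 0 @ [i])) (mergeS (merge u i) s 0)"
    by (simp add: to1_restr[symmetric] to1_sto)
  also have "\<dots> = restr (sto u) (mergeS u (i # s) 0)" using p by (simp add: restr_restr)
  finally show ?case .
qed

lemma to_sub: "to (sto u) s \<subseteq> sto u" by (simp add: to_restr restr_sub)

lemma mergeS_Suc: "mergeS u s (Suc k) = u (length s + Suc k)"
  by (induction s arbitrary: u) (simp_all add: merge_def)

lemma mergeS_len: "(\<forall>k. length (u k) = length (u' k)) \<Longrightarrow> length s = length s' \<Longrightarrow>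
   length (mergeS u s k) = length (mergeS u' s' k)"
proof (induction s arbitrary: s' u u')
  case Nil then show ?case by simp
next
  case (Cons i s)
  then obtain j s'' where s': "s' = j # s''" "length s = length s''" by (cases s') auto
  have "\<forall>k. length (merge u i k) = length (merge u' j k)"
    using Cons.prems(1) by (auto simp: merge_def split: nat.split)
  then show ?case using Cons.IH s' by simp
qed

lemma mergeS_app: "(\<forall>k<length s. v k = u k) \<Longrightarrow> v (length s) = u (length s) @ r \<Longrightarrow>
   mergeS v s 0 = mergeS u s 0 @ r"
proof (induction s arbitrary: u v)
  case Nil then show ?case by simp
next
  case (Cons i s)
  have a: "\<forall>k<length s. merge v i k = merge u i k"
    using Cons.prems(1) by (auto simp: merge_def split: nat.split)
  have b: "merge v i (length s) = merge u i (length s) @ r"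
    using Cons.prems by (cases "length s") (auto simp: merge_def)
  show ?case using Cons.IH[OF a b] by simp
qed

lemma act_length[simp]: "length (act \<sigma> t) = length t" by (simp add: act_def)
lemma act_nth: "j < length t \<Longrightarrow> act \<sigma> t ! j = (if j < length \<sigma> then t ! j \<noteq> \<sigma> ! j else t ! j)"
  by (simp add: act_def)
lemma act_invol[simp]: "act \<sigma> (act \<sigma> t) = t"
  by (rule nth_equalityI) (auto simp: act_nth)
lemma act_prefix: assumes "prefix t w" shows "prefix (act \<sigma> t) (act \<sigma> w)"
proof -
  obtain z where w: "w = t @ z" using assms by (auto simp: prefix_def)
  have "act \<sigma> t = take (length t) (act \<sigma> w)"
    by (rule nth_equalityI) (auto simp: act_nth w nth_append)
  then show ?thesis by (metis take_is_prefix)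
qed
lemma act_append: "length \<sigma> \<le> length x \<Longrightarrow> act \<sigma> (x @ y) = act \<sigma> x @ y"
  by (rule nth_equalityI) (auto simp: act_nth nth_append)

definition xo :: "bool list \<Rightarrow> bool list \<Rightarrow> bool list" where
  "xo a b = map2 (\<noteq>) a b"

lemma act_xo: "length a = length b \<Longrightarrow> act (xo a b) (a @ r) = b @ r"
  by (rule nth_equalityI) (auto simp: act_nth nth_append xo_def)
lemma length_xo: "length a = length b \<Longrightarrow> length (xo a b) = length a"
  by (simp add: xo_def)

lemma act_tree_sto: assumes "length \<sigma> \<le> length (v 0)"
  shows "act_tree \<sigma> (sto v) = sto (v(0 := act \<sigma> (v 0)))" (is "_ = sto ?v")
proof -
  have sh: "shift ?v = shift v" by (simp add: shift_def)
  show ?thesis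
  proof (intro set_eqI iffI)
    fix x assume "x \<in> act_tree \<sigma> (sto v)"
    then obtain t where x: "x = act \<sigma> t" and t: "t \<in> sto v" by (auto simp: act_tree_def)
    show "x \<in> sto ?v"
    proof (rule sto_E[OF t])
      assume "prefix t (v 0)"
      then have "prefix x (?v 0)" using x act_prefix by simp
      then show ?thesis by (rule sto_I1)
    next
      fix i t' assume "t = v 0 @ [i] @ t'" "t' \<in> sto (shift v)"
      then show ?thesis using x assms sto_I2[of t' ?v i] sh by (simp add: act_append)
    qed
  next
    fix x assume x: "x \<in> sto ?v"
    show "x \<in> act_tree \<sigma> (sto v)"
    proof (rule sto_E[OF x])
      assume "prefix x (?v 0)"
      then have "prefix (act \<sigma> x) (v 0)" using act_prefix[of x "act \<sigma> (v 0)" \<sigma>] by simp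
      then have "act \<sigma> x \<in> sto v" by (rule sto_I1)
      then show ?thesis unfolding act_tree_def by (rule image_eqI[rotated]) simp
    next
      fix i t' assume e: "x = ?v 0 @ [i] @ t'" "t' \<in> sto (shift ?v)"
      then have "v 0 @ [i] @ t' \<in> sto v" using sto_I2[of t' v i] sh by simp
      moreover have "x = act \<sigma> (v 0 @ [i] @ t')" using e assms by (simp add: act_append)
      ultimately show ?thesis unfolding act_tree_def by blast
    qed
  qed
qed

lemma sto_subset_stem: "sto v \<subseteq> sto w \<Longrightarrow> prefix (w 0) (v 0)"
  using branching[of "v 0" w] branch_mem[of v] by auto

lemma sto_cover: "t \<in> sto u \<Longrightarrow> \<exists>s. length s = n \<and> t \<in> sto (mergeS u s)"
proof (induction n arbitrary: u)
  case 0 then show ?case by simp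
next
  case (Suc n)
  have "\<exists>i. t \<in> restr (sto u) (u 0 @ [i])"
  proof (rule sto_E[OF Suc.prems])
    assume "prefix t (u 0)"
    then have "prefix t (u 0 @ [False])" by simp
    then show ?thesis using Suc.prems by (auto simp: restr_def)
  next
    fix i t' assume "t = u 0 @ [i] @ t'" "t' \<in> sto (shift u)"
    then show ?thesis using Suc.prems by (auto simp: restr_def)
  qed
  then obtain i where "t \<in> sto (merge u i)" by (auto simp: to1_restr[symmetric] to1_sto)
  then obtain s where "length s = n" "t \<in> sto (mergeS (merge u i) s)" using Suc.IH by blast
  then show ?case by (intro exI[of _ "i # s"]) simp
qed


lemma silver_sto: "silver_tree (sto u)" by (auto simp: silver_tree_def)
lemma silverE: "silver_tree T \<Longrightarrow> (\<And>u. T = sto u \<Longrightarrow> Q) \<Longrightarrow> Q"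
  by (auto simp: silver_tree_def)

lemma part_i: assumes "silver_forcing P" shows "T \<in> P \<Longrightarrow> to T s \<in> P"
proof (induction s arbitrary: T)
  case Nil then show ?case by (simp add: to_Nil)
next
  case (Cons i s)
  have "silver_tree T" using assms Cons.prems by (auto simp: silver_forcing_def)
  then obtain u where T: "T = sto u" by (auto simp: silver_tree_def)
  have "to1 T i \<in> P" using assms Cons.prems branch_mem[of u i]
    unfolding T to1_restr silver_forcing_def by blast
  then show ?case using Cons.IH by (simp add: to_Cons)
qed

lemma to_act: assumes "length s = length s0"
  shows "to (sto u) s = act_tree (xo (mergeS u s0 0) (mergeS u s 0)) (to (sto u) s0)"
proof -
  let ?\<sigma> = "xo (mergeS u s0 0) (mergeS u s 0)"
  have len: "length (mergeS u s0 0) = length (mergeS u s 0)"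
    using mergeS_len[of u u s0 s 0] assms by simp
  have "(mergeS u s0)(0 := act ?\<sigma> (mergeS u s0 0)) = mergeS u s"
  proof
    fix k show "((mergeS u s0)(0 := act ?\<sigma> (mergeS u s0 0))) k = mergeS u s k"
      using act_xo[OF len, of "[]"] assms by (cases k) (simp_all add: mergeS_Suc)
  qed
  moreover have "length ?\<sigma> \<le> length (mergeS u s0 0)" by (simp add: length_xo len)
  ultimately show ?thesis by (simp add: to_sto act_tree_sto)
qed

lemma part_ii: assumes "silver_forcing P" "silver_tree T" "length s0 = n"
  shows "to T s0 \<in> P \<longleftrightarrow> T \<in> Col n P"
proof
  assume h: "to T s0 \<in> P"
  obtain u where T: "T = sto u" using assms(2) by (auto simp: silver_tree_def)
  have "to T s \<in> P" if "length s = n" for s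
    using to_act[of s s0 u] that assms(1,3) h unfolding T silver_forcing_def by simp
  then show "T \<in> Col n P" using assms(2) by (simp add: Col_def)
next
  assume "T \<in> Col n P" then show "to T s0 \<in> P" using assms(3) by (simp add: Col_def)
qed

definition ext :: "nat \<Rightarrow> (nat \<Rightarrow> bool list) \<Rightarrow> (nat \<Rightarrow> bool list) \<Rightarrow> bool" where
  "ext n v u \<longleftrightarrow> (\<forall>k<n. v k = u k) \<and> prefix (u n) (v n) \<and> sto v \<subseteq> sto u"

lemma ext_refl: "ext n u u" by (simp add: ext_def)
lemma ext_trans: "ext n w v \<Longrightarrow> ext n v u \<Longrightarrow> ext n w u"
  unfolding ext_def using prefix_order.trans by auto

lemma ext_sqsub: assumes "ext n v u" shows "sqsub n (sto v) (sto u)"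
proof -
  have e: "\<forall>k<n. v k = u k" using assms by (simp add: ext_def)
  have "spl k (sto v) = spl k (sto u)" if "k < n" for k
    unfolding spl_sto using e that by (auto intro!: sum.cong)
  then show ?thesis using assms by (simp add: sqsub_def ext_def)
qed

lemma restr_mono: "T' \<subseteq> T \<Longrightarrow> prefix a b \<Longrightarrow> restr T' b \<subseteq> restr T a"
  unfolding restr_def using prefix_same_cases prefix_order.trans by blast

lemma ext_to: assumes "ext n v u" "length s = n" shows "to (sto v) s \<subseteq> to (sto u) s"
proof -
  obtain r where r: "v n = u n @ r" using assms(1) by (auto simp: ext_def prefix_def)
  have "mergeS v s 0 = mergeS u s 0 @ r"
    using assms r by (intro mergeS_app) (auto simp: ext_def)
  then have "prefix (mergeS u s 0) (mergeS v s 0)" by simp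
  then show ?thesis using assms(1) unfolding to_restr ext_def by (intro restr_mono) auto
qed

lemma part_iii: assumes P: "silver_forcing P" and U: "sto u \<in> Col n P" and s0: "length s0 = n"
  and SP: "S \<in> P" and Ssub: "S \<subseteq> to (sto u) s0"
  shows "\<exists>w. sto w \<in> Col n P \<and> ext n w u \<and> to (sto w) s0 = S"
proof -
  have "silver_tree S" using P SP by (auto simp: silver_forcing_def)
  then obtain v where S: "S = sto v" by (auto simp: silver_tree_def)
  have "prefix (mergeS u s0 0) (v 0)"
    using Ssub unfolding S to_sto by (rule sto_subset_stem)
  then obtain r where v0: "v 0 = mergeS u s0 0 @ r" by (auto simp: prefix_def)
  define w where "w = (\<lambda>k. if k < n then u k else if k = n then u n @ r else v (k - n))"
  have wm: "mergeS w s 0 = mergeS u s 0 @ r" if "length s = n" for s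
    using that by (intro mergeS_app) (auto simp: w_def)
  define \<sigma> where "\<sigma> s = xo (mergeS u s0 0) (mergeS u s 0)" for s
  have len: "length (mergeS u s0 0) = length (mergeS u s 0)" if "length s = n" for s
    using mergeS_len[of u u s0 s 0] that s0 by simp
  have key: "mergeS w s = v(0 := act (\<sigma> s) (v 0))" if "length s = n" for s
  proof
    fix k show "mergeS w s k = (v(0 := act (\<sigma> s) (v 0))) k"
    proof (cases k)
      case 0 then show ?thesis using wm[OF that] v0 act_xo[OF len[OF that]] by (simp add: \<sigma>_def)
    next
      case (Suc k') then show ?thesis using that by (simp add: mergeS_Suc w_def)
    qed
  qed
  have slen: "length (\<sigma> s) \<le> length (v 0)" if "length s = n" for s
    using len[OF that] v0 by (simp add: \<sigma>_def length_xo)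
  have toS: "to (sto w) s = act_tree (\<sigma> s) S" if "length s = n" for s
    using key[OF that] act_tree_sto[of "\<sigma> s" v, OF slen[OF that]] by (simp add: to_sto S)
  have "act (\<sigma> s0) (v 0) = v 0"
    using act_xo[of "mergeS u s0 0" "mergeS u s0 0" r] v0 by (simp add: \<sigma>_def)
  then have to0: "to (sto w) s0 = S"
    using key[OF s0] by (simp add: to_sto S)
  have col: "sto w \<in> Col n P"
    using toS SP P by (auto simp: Col_def silver_sto silver_forcing_def)
  have "sto w \<subseteq> sto u"
  proof
    fix t assume "t \<in> sto w"
    then obtain s where s: "length s = n" "t \<in> sto (mergeS w s)" using sto_cover by blast
    then have "t \<in> act_tree (\<sigma> s) S" using toS[OF s(1)] by (simp add: to_sto)
    also have "\<dots> \<subseteq> act_tree (\<sigma> s) (to (sto u) s0)" using Ssub by (auto simp: act_tree_def)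
    also have "\<dots> = to (sto u) s" using to_act[of s s0 u] s(1) s0 by (simp add: \<sigma>_def)
    also have "\<dots> \<subseteq> sto u" by (rule to_sub)
    finally show "t \<in> sto u" .
  qed
  then have "ext n w u" by (simp add: ext_def w_def)
  then show ?thesis using col to0 by blast
qed

lemma part_iv_list: assumes P: "silver_forcing P" and D: "open_dense P D" and U: "sto u \<in> Col n P"
  shows "\<exists>w. sto w \<in> Col n P \<and> ext n w u \<and> (\<forall>s\<in>set L. length s = n \<longrightarrow> to (sto w) s \<in> D)"
proof (induction L)
  case Nil then show ?case using U ext_refl by auto
next
  case (Cons s L)
  then obtain w1 where w1: "sto w1 \<in> Col n P" "ext n w1 u"
     "\<forall>s\<in>set L. length s = n \<longrightarrow> to (sto w1) s \<in> D" by blast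
  show ?case
  proof (cases "length s = n")
    case False then show ?thesis using w1 by auto
  next
    case True
    have "to (sto w1) s \<in> P" using w1(1) True by (simp add: Col_def)
    then obtain S where S: "S \<in> D" "S \<subseteq> to (sto w1) s" using D by (auto simp: open_dense_def)
    have "S \<in> P" using S D by (auto simp: open_dense_def)
    then obtain w2 where w2: "sto w2 \<in> Col n P" "ext n w2 w1" "to (sto w2) s = S"
      using part_iii[OF P w1(1) True _ S(2)] by blast
    have "to (sto w2) s' \<in> D" if "s' \<in> set L" "length s' = n" for s'
    proof -
      have "to (sto w2) s' \<subseteq> to (sto w1) s'" using ext_to[OF w2(2) that(2)] .
      moreover have "to (sto w2) s' \<in> P" using w2(1) that(2) by (simp add: Col_def)
      moreover have "to (sto w1) s' \<in> D" using w1(3) that by blast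
      ultimately show ?thesis using D by (auto simp: open_dense_def)
    qed
    then show ?thesis using w2 S(1) ext_trans[OF w2(2) w1(2)] by auto
  qed
qed

theorem lemma6p6:
  fixes P :: "bool list set set" and n :: nat
  assumes "silver_forcing P"
  shows "(\<forall>T\<in>P. \<forall>s. to T s \<in> P)
    \<and> (\<forall>T s0. silver_tree T \<and> length s0 = n \<longrightarrow> (to T s0 \<in> P \<longleftrightarrow> T \<in> Col n P))
    \<and> (\<forall>U s0 S. U \<in> Col n P \<and> length s0 = n \<and> S \<in> P \<and> S \<subseteq> to U s0 \<longrightarrow>
           (\<exists>V\<in>Col n P. sqsub n V U \<and> to V s0 = S))
    \<and> (\<forall>U D. U \<in> Col n P \<and> open_dense P D \<longrightarrow>
           (\<exists>V\<in>Col n P. sqsub n V U \<and> (\<forall>s. length s = n \<longrightarrow> to V s \<in> D)))"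
proof (intro conjI allI impI ballI)
  fix T s assume "T \<in> P" then show "to T s \<in> P" using part_i[OF assms] by blast
next
  fix T and s0 :: "bool list" assume "silver_tree T \<and> length s0 = n"
  then show "to T s0 \<in> P \<longleftrightarrow> T \<in> Col n P" using part_ii[OF assms] by blast
next
  fix U S and s0 :: "bool list" assume h: "U \<in> Col n P \<and> length s0 = n \<and> S \<in> P \<and> S \<subseteq> to U s0"
  then obtain u where U: "U = sto u" by (auto simp: Col_def silver_tree_def)
  obtain w where "sto w \<in> Col n P" "ext n w u" "to (sto w) s0 = S"
    using part_iii[OF assms, of u n s0 S] h U by blast
  then show "\<exists>V\<in>Col n P. sqsub n V U \<and> to V s0 = S" using ext_sqsub U by blast
next
  fix U D assume h: "U \<in> Col n P \<and> open_dense P D"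
  then obtain u where U: "U = sto u" by (auto simp: Col_def silver_tree_def)
  have "finite {xs::bool list. set xs \<subseteq> UNIV \<and> length xs = n}"
    by (rule finite_lists_length_eq) simp
  then obtain L where L: "set L = {xs::bool list. length xs = n}" using finite_list by fastforce
  obtain w where w: "sto w \<in> Col n P" "ext n w u" "\<forall>s\<in>set L. length s = n \<longrightarrow> to (sto w) s \<in> D"
    using part_iv_list[OF assms, of D u n L] h U by blast
  have "sqsub n (sto w) U" using ext_sqsub[OF w(2)] U by simp
  moreover have "\<forall>s. length s = n \<longrightarrow> to (sto w) s \<in> D" using w(3) L by auto
  ultimately show "\<exists>V\<in>Col n P. sqsub n V U \<and> (\<forall>s. length s = n \<longrightarrow> to V s \<in> D)"
    using w(1) by blast
qed

end
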